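(* Let $A\in\mathbb{Z}^{m\times n}$, $b\in\mathbb{Z}^m$. If $Ax\leq b$ is totally dual $p$-adic and totally dual $q$-adic for distinct primes $p,q$, then $\{x:Ax\leq b\}$ is an integral polyhedron.
   Context: For a prime $p$, a $p$-adic rational is a number $a/p^k$ with $a,k\in\mathbb{Z}$, $k\ge0$; a vector is $p$-adic if all entries are $p$-adic rationals. A system $Ax\le b$ with integral $A,b$ is totally dual $p$-adic if for every integral $w$ for which $\min\{b^\top y: A^\top y=w,\ y\ge \mathbf{0}\}$ has an optimal solution, it has a $p$-adic optimal solution. A rational polyhedron is integral if every nonempty face of it contains an integral point. *)

theory Defs
  imports "HOL-Analysis.Analysis"
begin

definition padic_rat :: "nat \<Rightarrow> real \<Rightarrow> bool" where
  "padic_rat p r \<longleftrightarrow> (\<exists>(a::int) (k::nat). r = of_int a / (of_nat p) ^ k)"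

definition padic_vec :: "nat \<Rightarrow> real ^ 'm \<Rightarrow> bool" where
  "padic_vec p y \<longleftrightarrow> (\<forall>i. padic_rat p (y $ i))"

definition dual_feasible :: "int ^ 'n ^ 'm \<Rightarrow> int ^ 'n \<Rightarrow> (real ^ 'm) set" where
  "dual_feasible A w = {y. (\<forall>i. 0 \<le> y $ i) \<and>
      (\<forall>j. (\<Sum>i\<in>UNIV. y $ i * real_of_int (A $ i $ j)) = real_of_int (w $ j))}"

definition dual_obj :: "int ^ 'm \<Rightarrow> real ^ 'm \<Rightarrow> real" where
  "dual_obj b y = (\<Sum>i\<in>UNIV. real_of_int (b $ i) * y $ i)"

definition dual_optimal :: "int ^ 'n ^ 'm \<Rightarrow> int ^ 'm \<Rightarrow> int ^ 'n \<Rightarrow> real ^ 'm \<Rightarrow> bool" where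
  "dual_optimal A b w y \<longleftrightarrow> y \<in> dual_feasible A w \<and>
      (\<forall>y'\<in>dual_feasible A w. dual_obj b y \<le> dual_obj b y')"

definition totally_dual_padic :: "nat \<Rightarrow> int ^ 'n ^ 'm \<Rightarrow> int ^ 'm \<Rightarrow> bool" where
  "totally_dual_padic p A b \<longleftrightarrow>
     (\<forall>w :: int ^ 'n. (\<exists>y. dual_optimal A b w y) \<longrightarrow>
        (\<exists>y. dual_optimal A b w y \<and> padic_vec p y))"

definition polyhedron_of :: "int ^ 'n ^ 'm \<Rightarrow> int ^ 'm \<Rightarrow> (real ^ 'n) set" where
  "polyhedron_of A b = {x. \<forall>i. (\<Sum>j\<in>UNIV. real_of_int (A $ i $ j) * x $ j) \<le> real_of_int (b $ i)}"

definition integral_vec :: "real ^ 'n \<Rightarrow> bool" where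
  "integral_vec x \<longleftrightarrow> (\<forall>j. x $ j \<in> \<int>)"

definition integral_polyhedron :: "(real ^ 'n) set \<Rightarrow> bool" where
  "integral_polyhedron P \<longleftrightarrow> (\<forall>F. F face_of P \<and> F \<noteq> {} \<longrightarrow> (\<exists>x\<in>F. integral_vec x))"

end

theory Submission
  imports Defs
begin


lemma padic_int: "padic_rat p (of_int a)"
  unfolding padic_rat_def by (rule exI[of _ a], rule exI[of _ 0]) simp

lemma padic_add:
  assumes "p > 0" "padic_rat p x" "padic_rat p y" shows "padic_rat p (x + y)"
proof -
  obtain a k where a: "x = of_int a / of_nat p ^ k" using assms(2) unfolding padic_rat_def by blast
  obtain c l where c: "y = of_int c / of_nat p ^ l" using assms(3) unfolding padic_rat_def by blast
  have pk: "(of_nat p::real) ^ k \<noteq> 0" "(of_nat p::real) ^ l \<noteq> 0" using assms(1) by auto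
  have "x + y = of_int (a * int p ^ l + c * int p ^ k) / of_nat p ^ (k + l)"
    using pk by (simp add: a c field_simps power_add)
  then show ?thesis unfolding padic_rat_def by blast
qed

lemma padic_mult_int:
  assumes "padic_rat p x" shows "padic_rat p (of_int c * x)"
proof -
  obtain a k where a: "x = of_int a / of_nat p ^ k" using assms unfolding padic_rat_def by blast
  have "of_int c * x = of_int (c * a) / of_nat p ^ k" by (simp add: a)
  then show ?thesis unfolding padic_rat_def by blast
qed

lemma padic_sum:
  assumes "finite S" "p > 0" "\<forall>i\<in>S. padic_rat p (f i)" shows "padic_rat p (sum f S)"
  using assms(1,3)
proof (induction S rule: finite_induct)
  case empty
  then show ?case using padic_int[of p 0] by simp
next
  case (insert x F)
  then show ?case using padic_add[OF assms(2)] by simp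
qed

lemma pq_int:
  assumes "prime p" "prime q" "p \<noteq> q" "padic_rat p r" "padic_rat q r"
  shows "r \<in> \<int>"
proof -
  obtain a k where a: "r = of_int a / of_nat p ^ k" using assms(4) unfolding padic_rat_def by blast
  obtain c l where c: "r = of_int c / of_nat q ^ l" using assms(5) unfolding padic_rat_def by blast
  have p0: "p > 0" "q > 0" using assms prime_gt_0_nat by auto
  have "of_int a * of_nat q ^ l = (of_int c * of_nat p ^ k :: real)"
    using a c p0 by (simp add: field_simps)
  then have eq: "a * int q ^ l = c * int p ^ k"
    by (metis (mono_tags, opaque_lifting) of_int_eq_iff of_int_mult of_int_of_nat_eq of_int_power)
  have cop: "coprime (int p ^ k) (int q ^ l)"
    using primes_coprime[OF assms(1-3)] by simp
  have "int p ^ k dvd a * int q ^ l" using eq by simp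
  then have "int p ^ k dvd a" using cop by (simp add: coprime_dvd_mult_left_iff)
  then obtain e where "a = int p ^ k * e" by blast
  then have "r = of_int e" using a p0 by simp
  then show ?thesis by simp
qed



lemma bezout_fin:
  fixes f :: "'j \<Rightarrow> int"
  assumes "finite J" shows "\<exists>\<beta>. (\<Sum>j\<in>J. \<beta> j * f j) = Gcd (f ` J)"
  using assms
proof (induction J rule: finite_induct)
  case empty then show ?case by simp
next
  case (insert j J)
  then obtain \<beta> where b: "(\<Sum>j\<in>J. \<beta> j * f j) = Gcd (f ` J)" by blast
  obtain u v where uv: "u * f j + v * Gcd (f ` J) = gcd (f j) (Gcd (f ` J))" using bezout_int by blast
  define \<beta>' where "\<beta>' k = (if k = j then u else v * \<beta> k)" for k
  have "(\<Sum>k\<in>J. \<beta>' k * f k) = (\<Sum>k\<in>J. v * (\<beta> k * f k))"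
    using insert(2) by (intro sum.cong) (auto simp: \<beta>'_def)
  then have "(\<Sum>k\<in>insert j J. \<beta>' k * f k) = u * f j + (\<Sum>k\<in>J. v * (\<beta> k * f k))"
    using insert(1,2) by (simp add: \<beta>'_def)
  also have "\<dots> = gcd (f j) (Gcd (f ` J))" using uv b by (simp add: sum_distrib_left[symmetric])
  finally show ?case by auto
qed

lemma sum_upd:
  assumes "finite I" "i0 \<notin> I"
  shows "(\<Sum>i\<in>insert i0 I. (y(i0:=s)) i * f i) = s * f i0 + (\<Sum>i\<in>I. y i * f i)"
proof -
  have "(\<Sum>i\<in>I. (y(i0:=s)) i * f i) = (\<Sum>i\<in>I. y i * f i)"
    using assms(2) by (intro sum.cong) auto
  then show ?thesis using assms by simp
qed

lemma half_not_int: "(1/2::real) \<notin> \<int>"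
proof
  assume "(1/2::real) \<in> \<int>"
  then obtain k where k: "(1/2::real) = of_int k" by (auto elim: Ints_cases)
  then have "(of_int (2*k)::real) = 1" by simp
  then have "2*k = 1" by linarith
  then show False by presburger
qed

lemma sum_upd':
  assumes "finite I" "i0 \<notin> I"
  shows "(\<Sum>i\<in>insert i0 I. (if i = i0 then s else y i) * f i) = s * f i0 + (\<Sum>i\<in>I. y i * f i)"
  using sum_upd[OF assms, of y s f] by (simp add: fun_upd_def)

lemma kron:
  fixes M :: "'i \<Rightarrow> 'j \<Rightarrow> int" and c :: "'i \<Rightarrow> real"
  assumes "finite I" "finite J"
   and "\<forall>y. (\<forall>j\<in>J. (\<Sum>i\<in>I. y i * of_int (M i j)) \<in> \<int>) \<longrightarrow> (\<Sum>i\<in>I. y i * c i) \<in> \<int>"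
  shows "\<exists>x. \<forall>i\<in>I. c i = of_int (\<Sum>j\<in>J. M i j * x j)"
  using assms(1,3)
proof (induction I arbitrary: M c rule: finite_induct)
  case empty then show ?case by simp
next
  case (insert i0 I M c)
  note prem = insert.prems
  obtain \<beta> where \<beta>: "(\<Sum>j\<in>J. \<beta> j * M i0 j) = Gcd (M i0 ` J)"
    using bezout_fin[OF assms(2)] by blast
  define d where "d = Gcd (M i0 ` J)"
  have dvd: "\<forall>j\<in>J. d dvd M i0 j" unfolding d_def by simp
  show ?case
  proof (cases "d = 0")
    case True
    then have z: "\<forall>j\<in>J. M i0 j = 0" unfolding d_def by auto
    have ci0: "c i0 = 0"
    proof (rule ccontr)
      assume ne: "c i0 \<noteq> 0"
      define y where "y = (\<lambda>_. 0::real)(i0 := 1 / (2 * c i0))"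
      have "\<forall>j\<in>J. (\<Sum>i\<in>insert i0 I. y i * of_int (M i j)) \<in> \<int>"
        unfolding y_def sum_upd[OF insert(1,2)] using z by simp
      then have "(\<Sum>i\<in>insert i0 I. y i * c i) \<in> \<int>" using prem by blast
      then have "(1/2::real) \<in> \<int>" unfolding y_def sum_upd[OF insert(1,2)] using ne by simp
      then show False using half_not_int by blast
    qed
    have "\<exists>x. \<forall>i\<in>I. c i = of_int (\<Sum>j\<in>J. M i j * x j)"
    proof (rule insert.IH, intro allI impI)
      fix y :: "'i \<Rightarrow> real" assume H: "\<forall>j\<in>J. (\<Sum>i\<in>I. y i * of_int (M i j)) \<in> \<int>"
      have "\<forall>j\<in>J. (\<Sum>i\<in>insert i0 I. (y(i0:=0)) i * of_int (M i j)) \<in> \<int>"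
        unfolding sum_upd[OF insert(1,2)] using H by simp
      then have "(\<Sum>i\<in>insert i0 I. (y(i0:=0)) i * c i) \<in> \<int>" using prem by blast
      then show "(\<Sum>i\<in>I. y i * c i) \<in> \<int>" unfolding sum_upd[OF insert(1,2)] by simp
    qed
    then obtain x where "\<forall>i\<in>I. c i = of_int (\<Sum>j\<in>J. M i j * x j)" by blast
    moreover have "c i0 = of_int (\<Sum>j\<in>J. M i0 j * x j)" using ci0 z by simp
    ultimately show ?thesis by auto
  next
    case False
    define s0 where "s0 i = (\<Sum>j\<in>J. \<beta> j * M i j)" for i
    have s0i0: "s0 i0 = d" unfolding s0_def d_def using \<beta> by simp
    define q where "q j = M i0 j div d" for j
    have Mq: "\<forall>j\<in>J. M i0 j = d * q j" using dvd unfolding q_def by auto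
    define M' where "M' i j = M i j - q j * s0 i" for i j
    define y1 where "y1 = (\<lambda>_. 0::real)(i0 := 1 / of_int d)"
    have "\<forall>j\<in>J. (\<Sum>i\<in>insert i0 I. y1 i * of_int (M i j)) \<in> \<int>"
      unfolding y1_def sum_upd[OF insert(1,2)] using Mq False by simp
    then have "(\<Sum>i\<in>insert i0 I. y1 i * c i) \<in> \<int>" using prem by blast
    then have "c i0 / of_int d \<in> \<int>" unfolding y1_def sum_upd[OF insert(1,2)] by simp
    then obtain z where "c i0 / of_int d = of_int z" by (metis Ints_cases)
    then have cz: "c i0 = of_int d * of_int z" using False by (simp add: field_simps)
    define c' where "c' i = c i - of_int z * of_int (s0 i)" for i
    have "\<exists>x. \<forall>i\<in>I. c' i = of_int (\<Sum>j\<in>J. M' i j * x j)"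
    proof (rule insert.IH, intro allI impI)
      fix y :: "'i \<Rightarrow> real" assume H: "\<forall>j\<in>J. (\<Sum>i\<in>I. y i * of_int (M' i j)) \<in> \<int>"
      define s where "s = - (\<Sum>i\<in>I. y i * of_int (s0 i)) / of_int d"
      have ds: "of_int d * s = - (\<Sum>i\<in>I. y i * of_int (s0 i))" using False unfolding s_def by simp
      have "(\<Sum>i\<in>insert i0 I. (y(i0:=s)) i * of_int (M i j)) = (\<Sum>i\<in>I. y i * of_int (M' i j))"
        if j: "j \<in> J" for j
      proof -
        have "(\<Sum>i\<in>I. y i * of_int (M' i j)) = (\<Sum>i\<in>I. y i * of_int (M i j))
              - of_int (q j) * (\<Sum>i\<in>I. y i * of_int (s0 i))"
          unfolding M'_def by (simp add: algebra_simps sum_subtractf sum_distrib_left)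
        also have "\<dots> = (\<Sum>i\<in>I. y i * of_int (M i j)) + s * of_int (M i0 j)"
        proof -
          have e1: "s * of_int (M i0 j) = of_int (q j) * (of_int d * s)" using Mq j by (simp add: algebra_simps)
          show ?thesis unfolding e1 ds by simp
        qed
        finally show ?thesis unfolding sum_upd[OF insert(1,2)] by simp
      qed
      then have "\<forall>j\<in>J. (\<Sum>i\<in>insert i0 I. (y(i0:=s)) i * of_int (M i j)) \<in> \<int>" using H by simp
      then have "(\<Sum>i\<in>insert i0 I. (y(i0:=s)) i * c i) \<in> \<int>" using prem by blast
      moreover have "(\<Sum>i\<in>I. y i * c' i) = (\<Sum>i\<in>insert i0 I. (y(i0:=s)) i * c i)"
      proof -
        have "(\<Sum>i\<in>I. y i * c' i) = (\<Sum>i\<in>I. y i * c i) - of_int z * (\<Sum>i\<in>I. y i * of_int (s0 i))"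
          unfolding c'_def by (simp add: algebra_simps sum_subtractf sum_distrib_left)
        also have "\<dots> = (\<Sum>i\<in>I. y i * c i) + s * c i0"
        proof -
          have e1: "s * c i0 = of_int z * (of_int d * s)" using cz by (simp add: algebra_simps)
          show ?thesis unfolding e1 ds by simp
        qed
        finally show ?thesis unfolding sum_upd[OF insert(1,2)] by simp
      qed
      ultimately show "(\<Sum>i\<in>I. y i * c' i) \<in> \<int>" by simp
    qed
    then obtain x' where x': "\<forall>i\<in>I. c' i = of_int (\<Sum>j\<in>J. M' i j * x' j)" by blast
    define C where "C = z - (\<Sum>k\<in>J. x' k * q k)"
    define x where "x j = x' j + C * \<beta> j" for j
    have gen: "(\<Sum>j\<in>J. M i j * x j) = (\<Sum>j\<in>J. M i j * x' j) + C * s0 i" for i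
      unfolding x_def s0_def by (simp add: algebra_simps sum.distrib sum_distrib_left)
    have "c i = of_int (\<Sum>j\<in>J. M i j * x j)" if i: "i \<in> insert i0 I" for i
    proof (cases "i = i0")
      case True
      have "(\<Sum>j\<in>J. M i0 j * x' j) = d * (\<Sum>j\<in>J. x' j * q j)"
        using Mq by (simp add: sum_distrib_left algebra_simps cong: sum.cong)
      then have "(\<Sum>j\<in>J. M i0 j * x j) = d * z" using gen[of i0] s0i0 unfolding C_def
        by (simp add: algebra_simps)
      then show ?thesis using True cz by simp
    next
      case False
      then have iI: "i \<in> I" using i by simp
      have "(\<Sum>j\<in>J. M' i j * x' j) = (\<Sum>j\<in>J. M i j * x' j) - s0 i * (\<Sum>j\<in>J. x' j * q j)"
        unfolding M'_def by (simp add: algebra_simps sum_subtractf sum_distrib_left)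
      then have "c i = of_int ((\<Sum>j\<in>J. M i j * x' j) - s0 i * (\<Sum>j\<in>J. x' j * q j) + z * s0 i)"
        using x' iI unfolding c'_def by (metis (no_types, lifting) diff_add_cancel of_int_add of_int_mult)
      also have "\<dots> = of_int (\<Sum>j\<in>J. M i j * x j)"
        by (rule arg_cong[where f=of_int]) (use gen[of i] in \<open>simp add: C_def algebra_simps\<close>)
      finally show ?thesis .
    qed
    then show ?thesis by blast
  qed
qed



definition rowv :: "int ^ 'n ^ 'm \<Rightarrow> 'm \<Rightarrow> real ^ 'n \<Rightarrow> real" where
  "rowv A i x = (\<Sum>j\<in>UNIV. real_of_int (A $ i $ j) * x $ j)"

lemma rowv_lin: "rowv A i (x + t *\<^sub>R d) = rowv A i x + t * rowv A i d"
  unfolding rowv_def by (simp add: sum.distrib sum_distrib_left algebra_simps)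

lemma rowv_lin2: "rowv A i (x - t *\<^sub>R d) = rowv A i x - t * rowv A i d"
  unfolding rowv_def by (simp add: sum_subtractf sum_distrib_left algebra_simps)

lemma rowv_diff: "rowv A i (x - y) = rowv A i x - rowv A i y"
  unfolding rowv_def by (simp add: sum_subtractf algebra_simps)

lemma poly_rowv: "polyhedron_of A b = {x. \<forall>i. rowv A i x \<le> real_of_int (b $ i)}"
  unfolding polyhedron_of_def rowv_def by simp

lemma seg_face:
  fixes x0 d :: "'a::real_vector"
  assumes "F face_of P" "x0 \<in> F" "x0 + t *\<^sub>R d \<in> P" "x0 - e *\<^sub>R d \<in> P" "t > 0" "e > 0" "d \<noteq> 0"
  shows "x0 + t *\<^sub>R d \<in> F"
proof -
  define u where "u = t / (t + e)"
  have u: "0 < u" "u < 1" using assms(5,6) unfolding u_def by (auto simp: field_simps)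
  have "(1 - u) * t - u * e = 0" using assms(5,6) unfolding u_def by (simp add: field_simps)
  moreover have "(1 - u) *\<^sub>R (x0 + t *\<^sub>R d) + u *\<^sub>R (x0 - e *\<^sub>R d) = x0 + ((1 - u) * t - u * e) *\<^sub>R d"
    by (simp add: algebra_simps)
  ultimately have "x0 = (1 - u) *\<^sub>R (x0 + t *\<^sub>R d) + u *\<^sub>R (x0 - e *\<^sub>R d)"
    by simp
  moreover have "x0 + t *\<^sub>R d \<noteq> x0 - e *\<^sub>R d"
  proof
    assume "x0 + t *\<^sub>R d = x0 - e *\<^sub>R d"
    then have "(t + e) *\<^sub>R d = 0" by (simp add: algebra_simps)
    then show False using assms(5,6,7) by simp
  qed
  ultimately have "x0 \<in> open_segment (x0 + t *\<^sub>R d) (x0 - e *\<^sub>R d)"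
    unfolding in_segment using u by blast
  then show ?thesis using assms(1-4) unfolding face_of_def by blast
qed

lemma eps_exists:
  fixes A :: "int ^ 'n ^ 'm" and b :: "int ^ 'm"
  assumes "x0 \<in> polyhedron_of A b"
    and "\<forall>i. rowv A i x0 = real_of_int (b $ i) \<longrightarrow> rowv A i d = 0"
  shows "\<exists>e>0. x0 - e *\<^sub>R d \<in> polyhedron_of A b"
proof -
  let ?N = "{i. rowv A i x0 \<noteq> real_of_int (b $ i)}"
  define e where "e = Min (insert 1 ((\<lambda>i. (real_of_int (b $ i) - rowv A i x0) / (\<bar>rowv A i d\<bar> + 1)) ` ?N))"
  have x0: "\<forall>i. rowv A i x0 \<le> real_of_int (b $ i)" using assms(1) unfolding poly_rowv by simp
  have pos: "\<forall>a\<in>insert 1 ((\<lambda>i. (real_of_int (b $ i) - rowv A i x0) / (\<bar>rowv A i d\<bar> + 1)) ` ?N). 0 < a"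
  proof
    fix a assume "a \<in> insert 1 ((\<lambda>i. (real_of_int (b $ i) - rowv A i x0) / (\<bar>rowv A i d\<bar> + 1)) ` ?N)"
    then consider "a = 1" | i where "i \<in> ?N" "a = (real_of_int (b $ i) - rowv A i x0) / (\<bar>rowv A i d\<bar> + 1)"
      by blast
    then show "0 < a"
    proof cases
      case 1 then show ?thesis by simp
    next
      case 2
      have "real_of_int (b $ i) - rowv A i x0 > 0" using 2(1) x0[rule_format, of i] by simp
      moreover have "\<bar>rowv A i d\<bar> + 1 > 0" by simp
      ultimately show ?thesis using 2(2) by simp
    qed
  qed
  have "e > 0" unfolding e_def
    using pos by (subst Min_gr_iff) auto
  moreover have "rowv A i (x0 - e *\<^sub>R d) \<le> real_of_int (b $ i)" for i
  proof (cases "rowv A i x0 = real_of_int (b $ i)")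
    case True then show ?thesis using assms(2) by (simp add: rowv_lin2)
  next
    case False
    let ?r = "real_of_int (b $ i) - rowv A i x0"
    have "e \<le> ?r / (\<bar>rowv A i d\<bar> + 1)" unfolding e_def using False by (intro Min_le) auto
    then have "e * (\<bar>rowv A i d\<bar> + 1) \<le> ?r" by (simp add: field_simps add_pos_nonneg)
    moreover have "- (e * rowv A i d) \<le> e * (\<bar>rowv A i d\<bar> + 1)"
    proof -
      have "e * (- rowv A i d) \<le> e * \<bar>rowv A i d\<bar>"
        using \<open>e > 0\<close> by (intro mult_left_mono) auto
      moreover have "e * \<bar>rowv A i d\<bar> \<le> e * (\<bar>rowv A i d\<bar> + 1)"
        using \<open>e > 0\<close> by simp
      ultimately show ?thesis by simp
    qed
    ultimately show ?thesis by (simp add: rowv_lin2)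
  qed
  ultimately show ?thesis unfolding poly_rowv by auto
qed



lemma minface:
  fixes A :: "int ^ 'n ^ 'm" and b :: "int ^ 'm"
  assumes F: "F face_of polyhedron_of A b" and ne: "F \<noteq> {}"
  shows "\<exists>x0\<in>F. {x. \<forall>i. rowv A i x0 = real_of_int (b $ i) \<longrightarrow> rowv A i x = real_of_int (b $ i)} \<subseteq> F"
proof -
  let ?P = "polyhedron_of A b"
  define tight where "tight x = {i. rowv A i x = real_of_int (b $ i)}" for x
  have FP: "F \<subseteq> ?P" using F face_of_imp_subset by blast
  obtain x00 where "x00 \<in> F" using ne by blast
  have "\<exists>x. x \<in> F \<and> (\<forall>y. y \<in> F \<longrightarrow> card (tight y) \<le> card (tight x))"
  proof (rule Lattices_Big.ex_has_greatest_nat[of "\<lambda>x. x \<in> F" x00 "\<lambda>x. card (tight x)" "Suc (CARD('m))"])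
    show "x00 \<in> F" by fact
    show "\<forall>y. y \<in> F \<longrightarrow> card (tight y) < Suc CARD('m)"
      by (simp add: card_mono le_imp_less_Suc)
  qed
  then obtain x0 where x0F: "x0 \<in> F" and maxc: "\<And>y. y \<in> F \<Longrightarrow> card (tight y) \<le> card (tight x0)" by blast
  have x0P: "x0 \<in> ?P" using x0F FP by blast
  then have x0le: "\<forall>i. rowv A i x0 \<le> real_of_int (b $ i)" unfolding poly_rowv by simp
  let ?E = "{x. \<forall>i. rowv A i x0 = real_of_int (b $ i) \<longrightarrow> rowv A i x = real_of_int (b $ i)}"
  have inF: "x \<in> F" if xE: "x \<in> ?E" and xP: "x \<in> ?P" for x
  proof (cases "x = x0")
    case True then show ?thesis using x0F by simp
  next
    case False
    define d where "d = x - x0"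
    have d0: "d \<noteq> 0" using False unfolding d_def by simp
    have dT: "\<forall>i. rowv A i x0 = real_of_int (b $ i) \<longrightarrow> rowv A i d = 0"
      using xE unfolding d_def rowv_diff by simp
    obtain e where e: "e > 0" "x0 - e *\<^sub>R d \<in> ?P" using eps_exists[OF x0P dT] by blast
    have "x0 + 1 *\<^sub>R d \<in> F"
      by (rule seg_face[OF F x0F _ e(2) _ e(1) d0]) (use xP d_def in auto)
    then show ?thesis unfolding d_def by simp
  qed
  have "?E \<subseteq> ?P"
  proof
    fix x assume xE: "x \<in> ?E"
    show "x \<in> ?P"
    proof (rule ccontr)
      assume "x \<notin> ?P"
      then obtain k where k: "rowv A k x > real_of_int (b $ k)" unfolding poly_rowv by (auto simp: not_le)
      define d where "d = x - x0"
      have dT: "\<forall>i. rowv A i x0 = real_of_int (b $ i) \<longrightarrow> rowv A i d = 0"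
        using xE unfolding d_def rowv_diff by simp
      have kT: "rowv A k x0 < real_of_int (b $ k)" 
      proof -
        have "rowv A k x0 \<noteq> real_of_int (b $ k)" using k xE by auto
        then show ?thesis using x0le[rule_format, of k] by simp
      qed
      have kd: "rowv A k d > real_of_int (b $ k) - rowv A k x0" using k unfolding d_def rowv_diff by simp
      then have d0: "d \<noteq> 0" using kT unfolding rowv_def by auto
      define K where "K = {i. rowv A i x0 < real_of_int (b $ i) \<and> rowv A i d > 0}"
      define g where "g i = (real_of_int (b $ i) - rowv A i x0) / rowv A i d" for i
      have kK: "k \<in> K" unfolding K_def using kT kd by simp
      define t where "t = Min (g ` K)"
      have finK: "finite (g ` K)" by simp
      have neK: "g ` K \<noteq> {}" using kK by blast
      obtain k1 where k1: "k1 \<in> K" "t = g k1" using Min_in[OF finK neK] unfolding t_def by auto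
      have tle: "t \<le> g i" if "i \<in> K" for i unfolding t_def using that by (intro Min_le) auto
      have tpos: "t > 0" using k1 unfolding K_def g_def by simp
      have "g k < 1" unfolding g_def using kd kT by (simp add: divide_less_eq)
      then have t1: "t < 1" using tle[OF kK] by simp
      define x1 where "x1 = x0 + t *\<^sub>R d"
      have x1P: "x1 \<in> ?P" unfolding poly_rowv
      proof (intro CollectI allI)
        fix i
        show "rowv A i x1 \<le> real_of_int (b $ i)"
        proof (cases "i \<in> K")
          case True
          have "t * rowv A i d \<le> g i * rowv A i d"
            using tle[OF True] True unfolding K_def by (intro mult_right_mono) auto
          also have "\<dots> = real_of_int (b $ i) - rowv A i x0" using True unfolding K_def g_def by simp
          finally show ?thesis unfolding x1_def rowv_lin by simp
        next
          case False
          then have "rowv A i x0 = real_of_int (b $ i) \<or> rowv A i d \<le> 0"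
            using x0le[rule_format, of i] unfolding K_def by auto
          then show ?thesis
          proof
            assume "rowv A i x0 = real_of_int (b $ i)"
            then show ?thesis using dT unfolding x1_def rowv_lin by simp
          next
            assume "rowv A i d \<le> 0"
            then have "t * rowv A i d \<le> 0" using tpos by (simp add: mult_nonneg_nonpos)
            then show ?thesis using x0le[rule_format, of i] unfolding x1_def rowv_lin by simp
          qed
        qed
      qed
      obtain e where e: "e > 0" "x0 - e *\<^sub>R d \<in> ?P" using eps_exists[OF x0P dT] by blast
      have x1F: "x1 \<in> F" unfolding x1_def
        by (rule seg_face[OF F x0F _ e(2) tpos e(1) d0]) (use x1P x1_def in auto)
      have sub: "tight x0 \<subseteq> tight x1" unfolding tight_def x1_def rowv_lin using dT by auto
      have "k1 \<in> tight x1" using k1 unfolding tight_def x1_def rowv_lin K_def g_def by auto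
      moreover have "k1 \<notin> tight x0" using k1 unfolding tight_def K_def by auto
      ultimately have "tight x0 \<subset> tight x1" using sub by blast
      then have "card (tight x0) < card (tight x1)" by (simp add: psubset_card_mono)
      with maxc[OF x1F] show False by simp
    qed
  qed
  then show ?thesis using inF x0F by blast
qed



lemma feas_eq:
  assumes "y \<in> dual_feasible A w"
  shows "(\<Sum>j\<in>UNIV. real_of_int (w $ j) * x $ j) = (\<Sum>i\<in>UNIV. y $ i * rowv A i x)"
proof -
  have "(\<Sum>j\<in>UNIV. real_of_int (w $ j) * x $ j) = (\<Sum>j\<in>UNIV. (\<Sum>i\<in>UNIV. y $ i * real_of_int (A $ i $ j)) * x $ j)"
    using assms by (simp add: dual_feasible_def)
  also have "\<dots> = (\<Sum>j\<in>UNIV. \<Sum>i\<in>UNIV. y $ i * (real_of_int (A $ i $ j) * x $ j))"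
    by (simp add: sum_distrib_right mult.assoc)
  also have "\<dots> = (\<Sum>i\<in>UNIV. \<Sum>j\<in>UNIV. y $ i * (real_of_int (A $ i $ j) * x $ j))"
    by (rule sum.swap)
  also have "\<dots> = (\<Sum>i\<in>UNIV. y $ i * rowv A i x)"
    by (simp add: rowv_def sum_distrib_left)
  finally show ?thesis .
qed

lemma weak_dual:
  assumes "y \<in> dual_feasible A w" "x \<in> polyhedron_of A b"
  shows "(\<Sum>j\<in>UNIV. real_of_int (w $ j) * x $ j) \<le> dual_obj b y"
proof -
  have "(\<Sum>i\<in>UNIV. y $ i * rowv A i x) \<le> (\<Sum>i\<in>UNIV. real_of_int (b $ i) * y $ i)"
  proof (rule sum_mono)
    fix i
    have "0 \<le> y $ i" using assms(1) by (simp add: dual_feasible_def)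
    moreover have "rowv A i x \<le> real_of_int (b $ i)" using assms(2) by (simp add: poly_rowv)
    ultimately show "y $ i * rowv A i x \<le> real_of_int (b $ i) * y $ i"
      by (simp add: mult.commute mult_left_mono)
  qed
  then show ?thesis using feas_eq[OF assms(1)] by (simp add: dual_obj_def)
qed

lemma padic_obj:
  assumes "prime p" "padic_vec p y" shows "padic_rat p (dual_obj b y)"
  unfolding dual_obj_def
  using assms by (intro padic_sum) (auto simp: padic_vec_def prime_gt_0_nat intro: padic_mult_int)

lemma sum_restrict_T:
  fixes f g :: "'a::finite \<Rightarrow> real"
  shows "(\<Sum>i\<in>(UNIV::'a::finite set). (if i \<in> T then f i else 0) * g i) = (\<Sum>i\<in>T. f i * g i)"
proof -
  have "(\<Sum>i\<in>T. f i * g i) = (\<Sum>i\<in>UNIV \<inter> T. f i * g i)" by simp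
  also have "\<dots> = (\<Sum>i\<in>UNIV. if i \<in> T then f i * g i else 0)" by (rule sum.inter_restrict) simp
  also have "\<dots> = (\<Sum>i\<in>UNIV. (if i \<in> T then f i else 0) * g i)" by (rule sum.cong) auto
  finally show ?thesis by simp
qed

lemma sum_restrict_T2:
  fixes f g :: "'a::finite \<Rightarrow> real"
  shows "(\<Sum>i\<in>(UNIV::'a::finite set). g i * (if i \<in> T then f i else 0)) = (\<Sum>i\<in>T. g i * f i)"
proof -
  have "(\<Sum>i\<in>(UNIV::'a::finite set). g i * (if i \<in> T then f i else 0))
      = (\<Sum>i\<in>(UNIV::'a::finite set). (if i \<in> T then f i else 0) * g i)"
    by (rule sum.cong) (auto simp: mult.commute)
  also have "\<dots> = (\<Sum>i\<in>T. f i * g i)" by (rule sum_restrict_T)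
  also have "\<dots> = (\<Sum>i\<in>T. g i * f i)" by (simp add: mult.commute)
  finally show ?thesis .
qed

theorem theorem1p5:
  fixes A :: "int ^ 'n ^ 'm" and b :: "int ^ 'm" and p q :: nat
  assumes "prime p" and "prime q" and "p \<noteq> q"
    and "totally_dual_padic p A b" and "totally_dual_padic q A b"
  shows "integral_polyhedron (polyhedron_of A b)"
  unfolding integral_polyhedron_def
proof (intro allI impI, elim conjE)
  fix F assume F: "F face_of polyhedron_of A b" and ne: "F \<noteq> {}"
  obtain x0 where x0F: "x0 \<in> F" and Esub:
    "{x. \<forall>i. rowv A i x0 = real_of_int (b $ i) \<longrightarrow> rowv A i x = real_of_int (b $ i)} \<subseteq> F"
    using minface[OF F ne] by blast
  define T where "T = {i. rowv A i x0 = real_of_int (b $ i)}"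
  have x0P: "x0 \<in> polyhedron_of A b" using F x0F face_of_imp_subset by blast
  show "\<exists>x\<in>F. integral_vec x"
  proof (rule ccontr)
    assume nI: "\<not> (\<exists>x\<in>F. integral_vec x)"
    have "\<not> (\<forall>y::'m \<Rightarrow> real. (\<forall>j\<in>UNIV. (\<Sum>i\<in>T. y i * of_int (A $ i $ j)) \<in> \<int>)
              \<longrightarrow> (\<Sum>i\<in>T. y i * real_of_int (b $ i)) \<in> \<int>)"
    proof
      assume H: "\<forall>y::'m \<Rightarrow> real. (\<forall>j\<in>UNIV. (\<Sum>i\<in>T. y i * of_int (A $ i $ j)) \<in> \<int>)
              \<longrightarrow> (\<Sum>i\<in>T. y i * real_of_int (b $ i)) \<in> \<int>"
      obtain x :: "'n \<Rightarrow> int" where x: "\<forall>i\<in>T. real_of_int (b $ i) = of_int (\<Sum>j\<in>UNIV. A $ i $ j * x j)"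
        using kron[of T UNIV "\<lambda>i j. A $ i $ j" "\<lambda>i. real_of_int (b $ i)"] H by auto
      define xv :: "real ^ 'n" where "xv = (\<chi> j. real_of_int (x j))"
      have "rowv A i xv = real_of_int (b $ i)" if "i \<in> T" for i
        using x that unfolding rowv_def xv_def by simp
      then have "xv \<in> F" using Esub unfolding T_def by auto
      moreover have "integral_vec xv" unfolding integral_vec_def xv_def by simp
      ultimately show False using nI by blast
    qed
    then obtain y :: "'m \<Rightarrow> real" where yA: "\<forall>j. (\<Sum>i\<in>T. y i * of_int (A $ i $ j)) \<in> \<int>"
      and yb: "(\<Sum>i\<in>T. y i * real_of_int (b $ i)) \<notin> \<int>" by blast
    define u where "u i = (if i \<in> T then y i - of_int \<lfloor>y i\<rfloor> else 0)" for i
    define yv :: "real ^ 'm" where "yv = (\<chi> i. u i)"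
    define w :: "int ^ 'n" where
      "w = (\<chi> j. \<lfloor>\<Sum>i\<in>T. y i * of_int (A $ i $ j)\<rfloor> - (\<Sum>i\<in>T. \<lfloor>y i\<rfloor> * A $ i $ j))"
    have yvfeas: "yv \<in> dual_feasible A w"
      unfolding dual_feasible_def
    proof (intro CollectI conjI allI)
      fix i show "0 \<le> yv $ i" unfolding yv_def u_def by simp
    next
      fix j
      have "(\<Sum>i\<in>UNIV. yv $ i * real_of_int (A $ i $ j))
          = (\<Sum>i\<in>T. (y i - of_int \<lfloor>y i\<rfloor>) * real_of_int (A $ i $ j))"
        unfolding yv_def u_def by (simp add: sum_restrict_T)
      also have "\<dots> = (\<Sum>i\<in>T. y i * of_int (A $ i $ j)) - of_int (\<Sum>i\<in>T. \<lfloor>y i\<rfloor> * A $ i $ j)"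
        by (simp add: algebra_simps sum_subtractf)
      also have "\<dots> = real_of_int (w $ j)"
      proof -
        obtain k where k: "(\<Sum>i\<in>T. y i * of_int (A $ i $ j)) = of_int k"
          using yA by (metis Ints_cases)
        show ?thesis unfolding w_def using k by simp
      qed
      finally show "(\<Sum>i\<in>UNIV. yv $ i * real_of_int (A $ i $ j)) = real_of_int (w $ j)" .
    qed
    have objv: "dual_obj b yv = (\<Sum>j\<in>UNIV. real_of_int (w $ j) * x0 $ j)"
      unfolding feas_eq[OF yvfeas] dual_obj_def
      by (rule sum.cong) (auto simp: yv_def u_def T_def)
    have opt: "dual_optimal A b w yv"
      unfolding dual_optimal_def using yvfeas objv weak_dual[OF _ x0P] by auto
    have ex: "dual_obj b yv = dual_obj b y'" if "dual_optimal A b w y'" for y'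
      using opt that unfolding dual_optimal_def by (meson order_antisym)
    obtain yp where yp: "dual_optimal A b w yp" "padic_vec p yp"
      using assms(4) opt unfolding totally_dual_padic_def by blast
    obtain yq where yq: "dual_optimal A b w yq" "padic_vec q yq"
      using assms(5) opt unfolding totally_dual_padic_def by blast
    have "padic_rat p (dual_obj b yv)" using ex[OF yp(1)] padic_obj[OF assms(1) yp(2)] by simp
    moreover have "padic_rat q (dual_obj b yv)" using ex[OF yq(1)] padic_obj[OF assms(2) yq(2)] by simp
    ultimately have Vint: "dual_obj b yv \<in> \<int>" using pq_int assms(1-3) by blast
    have "dual_obj b yv = (\<Sum>i\<in>T. real_of_int (b $ i) * (y i - of_int \<lfloor>y i\<rfloor>))"
      unfolding dual_obj_def yv_def u_def by (simp add: sum_restrict_T2)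
    also have "\<dots> = (\<Sum>i\<in>T. y i * real_of_int (b $ i)) - of_int (\<Sum>i\<in>T. \<lfloor>y i\<rfloor> * b $ i)"
      by (simp add: algebra_simps sum_subtractf)
    finally have "(\<Sum>i\<in>T. y i * real_of_int (b $ i)) = dual_obj b yv + of_int (\<Sum>i\<in>T. \<lfloor>y i\<rfloor> * b $ i)"
      by simp
    also have "\<dots> \<in> \<int>" using Vint by (rule Ints_add) (rule Ints_of_int)
    finally show False using yb by simp
  qed
qed

end
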